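(* Let $q>0$. For every integer $j\ge1$, $$\frac{(-1)^j}{j!}\frac{d}{dq}\tilde\gamma_j(q)=-\sum_{k=j-1}^\infty\frac{(-1)^k}{k!}\binom{k+1}{j}\tilde\gamma_k(q),$$ and $$-\tilde\psi'(q)=-\sum_{k=0}^\infty\frac{(-1)^k}{k!}\tilde\gamma_k(q).$$
   Context: For $q>0$, $\zeta_E(z,q)=\sum_{n=0}^\infty (-1)^n (n+q)^{-z}$ for $\mathrm{Re}(z)>0$, extended by analytic continuation to an entire function of $z$. The modified Stieltjes constants $\tilde\gamma_k(q)$ are defined by the Taylor expansion $\zeta_E(z,q)=\sum_{k=0}^\infty\frac{(-1)^k\tilde\gamma_k(q)}{k!}(z-1)^k$. The modified digamma function is $\tilde\psi(q):=-\tilde\gamma_0(q)=-\zeta_E(1,q)$. *)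

theory Defs
  imports "HOL-Complex_Analysis.Complex_Analysis"
begin

definition zetaE :: "complex \<Rightarrow> real \<Rightarrow> complex" where
  "zetaE z q = (THE f. f holomorphic_on UNIV \<and>
      (\<forall>w. 0 < Re w \<longrightarrow>
         (\<lambda>n. (-1) ^ n * (of_real (real n + q)) powr (- w)) sums f w)) z"

text \<open>Modified Stieltjes constants: zeta_E(z,q) = sum_k (-1)^k gt_k(q)/k! (z-1)^k,
  i.e. gt_k(q) = (-1)^k times the k-th z-derivative of zeta_E at z = 1.\<close>
definition gamma_tilde :: "nat \<Rightarrow> real \<Rightarrow> complex" where
  "gamma_tilde k q = (-1) ^ k * (deriv ^^ k) (\<lambda>z. zetaE z q) 1"

definition psi_tilde :: "real \<Rightarrow> complex" where
  "psi_tilde q = - gamma_tilde 0 q"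

end

theory Submission
  imports Defs
begin



fun phi :: "nat \<Rightarrow> complex \<Rightarrow> real \<Rightarrow> complex" where
  "phi 0 z y = of_real y powr (-z)"
| "phi (Suc k) z y = phi k z y - phi k z (y + 1)"

lemma ofreal_vd: "((\<lambda>y::real. (of_real y :: complex)) has_vector_derivative 1) (at y)"
  using has_vector_derivative_of_real[where f="\<lambda>y. y" and D=1, OF DERIV_ident] by simp

lemma phi0_vd:
  fixes z :: complex
  assumes "y > 0"
  shows "((\<lambda>y. of_real y powr (-z)) has_vector_derivative (-z * of_real y powr (-z-1))) (at y)"
proof -
  have "(of_real y::complex) \<notin> \<real>\<^sub>\<le>\<^sub>0" using assms by (auto simp: nonpos_Reals_def)
  then have "((\<lambda>w::complex. w powr (-z)) has_field_derivative (-z * (of_real y) powr (-z - 1))) (at (of_real y))"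
    by (rule has_field_derivative_powr)

  from field_vector_diff_chain_at[OF ofreal_vd this] show ?thesis
    by (simp add: o_def)
qed

lemma phi_vd:
  assumes "y > 0"
  shows "((phi k z) has_vector_derivative (-z * phi k (z+1) y)) (at y)"
  using assms
proof (induction k arbitrary: y)
  case 0
  have eq: "-(z+1) = -z-1" by simp
  show ?case using phi0_vd[of y z] 0 by (simp only: phi.simps eq)
next
  case (Suc k)
  have a: "((phi k z) has_vector_derivative (-z * phi k (z+1) y)) (at y)" using Suc by auto
  have "((phi k z) has_vector_derivative (-z * phi k (z+1) (y+1))) (at (y+1))" using Suc by auto
  then have b: "((\<lambda>y. phi k z (y+1)) has_vector_derivative (-z * phi k (z+1) (y+1))) (at y)"
  proof -
    have "((\<lambda>y::real. y + 1) has_real_derivative 1) (at y)" by (auto intro!: derivative_eq_intros)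
    then have "((\<lambda>y::real. y + 1) has_vector_derivative 1) (at y)"
      by (simp add: has_real_derivative_iff_has_vector_derivative)
    from vector_diff_chain_at[OF this \<open>((phi k z) has_vector_derivative _) (at (y+1))\<close>]
    show ?thesis by (simp add: o_def)
  qed
  have "((\<lambda>y. phi k z y - phi k z (y+1)) has_vector_derivative (-z * phi k (z+1) y - (-z * phi k (z+1) (y+1)))) (at y)"
    by (rule has_vector_derivative_diff[OF a b])
  then show ?case by (simp add: algebra_simps)
qed



lemma mvt_vec:
  fixes f :: "real \<Rightarrow> 'b::real_normed_vector"
  assumes "\<And>x. x \<in> S \<Longrightarrow> (f has_vector_derivative f' x) (at x within S)"
    and "closed_segment a b \<subseteq> S" and "\<And>x. x \<in> S \<Longrightarrow> norm (f' x) \<le> M" and "a \<in> S"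
  shows "norm (f b - f a) \<le> 3 * M * norm (b - a)"
proof -
  have "norm (f b - f a - (b - a) *\<^sub>R f' a) \<le> norm (b - a) * (2*M)"
  proof (rule vector_differentiable_bound_linearization[OF assms(1,2) _ assms(4)])
    fix x assume "x \<in> S"
    have "norm (f' x - f' a) \<le> norm (f' x) + norm (f' a)" by (rule norm_triangle_ineq4)
    also have "\<dots> \<le> 2 * M" using assms(3)[OF \<open>x \<in> S\<close>] assms(3)[OF assms(4)] by simp
    finally show "norm (f' x - f' a) \<le> 2 * M" .
  qed auto
  moreover have "norm ((b - a) *\<^sub>R f' a) \<le> norm (b - a) * M"
    using assms(3)[OF assms(4)] by (simp add: mult_left_mono)
  moreover have "norm (f b - f a) \<le> norm (f b - f a - (b - a) *\<^sub>R f' a) + norm ((b - a) *\<^sub>R f' a)"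
    using norm_triangle_ineq[of "f b - f a - (b - a) *\<^sub>R f' a" "(b - a) *\<^sub>R f' a"] by simp
  ultimately have "norm (f b - f a) \<le> norm (b - a) * (2*M) + norm (b - a) * M"
    by linarith
  then show ?thesis by (simp add: algebra_simps)
qed

lemma powr_shift_bound:
  fixes a y s b B :: real
  assumes "a > 0" "y \<ge> a" "y \<le> s" "s \<le> y + 1" "\<bar>b\<bar> \<le> B"
  shows "s powr (-b) \<le> (1 + 1/a) powr B * y powr (-b)"
proof (cases "b \<ge> 0")
  case True
  have "s powr (-b) \<le> y powr (-b)" using assms True by (intro powr_mono2') auto
  moreover have "1 \<le> (1 + 1/a) powr B" using assms by (intro ge_one_powr_ge_zero) auto
  ultimately show ?thesis
    by (smt (verit, best) mult_le_cancel_right1 powr_ge_zero)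
next
  case False
  have y0: "y > 0" using assms by auto
  have "s powr (-b) \<le> (y+1) powr (-b)" using assms False by (intro powr_mono2) auto
  also have "(y+1) = y * (1 + 1/y)" using y0 by (simp add: field_simps)
  also have "(y * (1 + 1/y)) powr (-b) = y powr (-b) * (1 + 1/y) powr (-b)"
    using y0 by (simp add: powr_mult)
  also have "(1 + 1/y) powr (-b) \<le> (1 + 1/a) powr (-b)"
    using assms False y0 by (intro powr_mono2) (auto simp: frac_le)
  also have "(1 + 1/a) powr (-b) \<le> (1 + 1/a) powr B"
    using assms False by (intro powr_mono) auto
  finally show ?thesis
    using y0 by (simp add: mult.commute mult_left_mono)
qed

lemma phi_bound:
  assumes "a > 0"
  shows "\<exists>C\<ge>0. \<forall>z y. norm z \<le> R \<longrightarrow> y \<ge> a \<longrightarrow> norm (phi k z y) \<le> C * y powr (-(Re z + real k))"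
proof (induction k arbitrary: R)
  case 0
  have "norm (phi 0 z y) \<le> 1 * y powr (-(Re z + real 0))" if "y \<ge> a" for z y
  proof -
    have "norm (phi 0 z y) = y powr (Re (-z))"
      using that assms by (simp add: norm_powr_real_powr)
    then show ?thesis by simp
  qed
  then show ?case by (intro exI[of _ 1]) auto
next
  case (Suc k)
  obtain C where C: "C \<ge> 0" "\<And>z y. norm z \<le> R + 1 \<Longrightarrow> y \<ge> a \<Longrightarrow> norm (phi k z y) \<le> C * y powr (-(Re z + real k))"
    using Suc.IH[of "R+1"] by blast
  define M where "M = (1 + 1/a) powr (R + 1 + real k)"
  have M0: "M \<ge> 0" unfolding M_def by simp
  define C' where "C' = 3 * (max R 0 * C * M)"
  have "norm (phi (Suc k) z y) \<le> C' * y powr (-(Re z + real (Suc k)))" if z: "norm z \<le> R" and y: "y \<ge> a" for z y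
  proof -
    let ?S = "{y..y+1}"
    let ?P = "y powr (-(Re z + 1 + real k))"
    have "norm (phi k z (y+1) - phi k z y) \<le> 3 * (max R 0 * C * M * ?P) * norm ((y+1) - y)"
    proof (rule mvt_vec[where S="?S" and f'="\<lambda>s. -z * phi k (z+1) s"])
      fix s assume s: "s \<in> ?S"
      then have "s > 0" using y assms by auto
      then show "(phi k z has_vector_derivative - z * phi k (z + 1) s) (at s within ?S)"
        using phi_vd has_vector_derivative_at_within by blast
      have nz1: "norm (z+1) \<le> R + 1" using z by (smt (verit) norm_one norm_triangle_ineq)
      have e: "Re (z+1) + real k = Re z + 1 + real k" by simp
      have sp: "s powr (-(Re z + 1 + real k)) \<le> M * ?P"
        unfolding M_def by (rule powr_shift_bound[OF assms y]) (use s abs_Re_le_cmod[of z] z in auto)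
      have "norm (-z * phi k (z + 1) s) = norm z * norm (phi k (z+1) s)" by (simp add: norm_mult)
      also have "\<dots> \<le> max R 0 * (C * s powr (-(Re (z+1) + real k)))"
        using C(2)[OF nz1, of s] s y z by (intro mult_mono) auto
      also have "\<dots> = max R 0 * (C * s powr (-(Re z + 1 + real k)))" by (simp only: e)
      also have "\<dots> \<le> max R 0 * (C * (M * ?P))"
        using C(1) sp by (intro mult_left_mono) auto
      finally show "norm (-z * phi k (z + 1) s) \<le> max R 0 * C * M * ?P" by (simp add: mult_ac)
    qed (use y in \<open>auto simp: closed_segment_real_eq\<close>)
    then have "norm (phi (Suc k) z y) \<le> C' * ?P"
      by (simp add: C'_def norm_minus_commute mult_ac)
    then show ?thesis by (simp add: algebra_simps)
  qed
  moreover have "C' \<ge> 0" unfolding C'_def using C(1) M0 by auto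
  ultimately show ?case by blast
qed



declare phi.simps(2)[simp del]

definition Sk :: "nat \<Rightarrow> complex \<Rightarrow> real \<Rightarrow> complex" where
  "Sk k z t = (\<Sum>n. (-1) ^ n * phi k z (real n + t))"

definition GK :: "nat \<Rightarrow> complex \<Rightarrow> real \<Rightarrow> complex" where
  "GK K z t = (\<Sum>k<K. phi k z t / 2 ^ (k+1)) + Sk K z t / 2 ^ K"

lemma summable_shift_powr:
  fixes t s :: real
  assumes "t > 0" "s > 1"
  shows "summable (\<lambda>n. (real n + t) powr (-s))"
proof (rule summable_comparison_test_ev)
  show "summable (\<lambda>n. real n powr (-s))" using assms by (simp add: summable_real_powr_iff)
  show "\<forall>\<^sub>F n in sequentially. norm ((real n + t) powr (-s)) \<le> real n powr (-s)"
    using eventually_ge_at_top[of "1::nat"]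
  proof eventually_elim
    case (elim n)
    then show ?case using assms by (auto intro!: powr_mono2')
  qed
qed

lemma phi_norm_summable:
  assumes "t > 0" "Re z + real k > 1"
  shows "summable (\<lambda>n. norm ((-1) ^ n * phi k z (real n + t)))"
proof -
  obtain C where C: "C \<ge> 0" "\<And>w y. norm w \<le> norm z \<Longrightarrow> y \<ge> t \<Longrightarrow> norm (phi k w y) \<le> C * y powr (-(Re w + real k))"
    using phi_bound[OF assms(1), of "norm z" k] by blast
  show ?thesis
  proof (rule summable_comparison_test)
    show "summable (\<lambda>n. C * (real n + t) powr (-(Re z + real k)))"
      using summable_shift_powr[OF assms(1), of "Re z + real k"] assms by (intro summable_mult) auto
    show "\<exists>N. \<forall>n\<ge>N. norm (norm ((-1) ^ n * phi k z (real n + t))) \<le> C * (real n + t) powr (-(Re z + real k))"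
      using C(2)[of z] assms by (auto simp: norm_mult norm_power)
  qed
qed

lemma phi_lim0:
  assumes "t > 0" "Re z + real k > 0"
  shows "(\<lambda>n. phi k z (real n + t)) \<longlonglongrightarrow> 0"
proof -
  obtain C where C: "C \<ge> 0" "\<And>w y. norm w \<le> norm z \<Longrightarrow> y \<ge> t \<Longrightarrow> norm (phi k w y) \<le> C * y powr (-(Re w + real k))"
    using phi_bound[OF assms(1), of "norm z" k] by blast
  show ?thesis
  proof (rule Lim_null_comparison)
    show "\<forall>\<^sub>F n in sequentially. norm (phi k z (real n + t)) \<le> C * (real n + t) powr (-(Re z + real k))"
      using C(2)[of z] assms by auto
    have "filterlim (\<lambda>n. real n + t) at_top sequentially" by real_asymp
    then have "(\<lambda>n. (real n + t) powr (-(Re z + real k))) \<longlonglongrightarrow> 0"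
      using assms by (intro tendsto_neg_powr) auto
    then show "(\<lambda>n. C * (real n + t) powr (-(Re z + real k))) \<longlonglongrightarrow> 0"
      by (intro tendsto_mult_right_zero)
  qed
qed

lemma alt_step:
  fixes h :: "nat \<Rightarrow> complex"
  assumes "h \<longlonglongrightarrow> 0" "(\<lambda>n. (-1) ^ n * (h n - h (Suc n))) sums B"
  shows "(\<lambda>n. (-1) ^ n * h n) sums ((h 0 + B) / 2)"
proof -
  have id2: "2 * (\<Sum>i<N. (-1) ^ i * h i) = h 0 + (\<Sum>i<N. (-1) ^ i * (h i - h (Suc i))) - (-1) ^ N * h N" for N
  proof (induction N)
    case (Suc N)
    have "2 * (\<Sum>i<Suc N. (-1) ^ i * h i) = 2 * (\<Sum>i<N. (-1) ^ i * h i) + 2 * ((-1) ^ N * h N)"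
      by (simp add: distrib_left)
    also have "\<dots> = h 0 + (\<Sum>i<N. (-1) ^ i * (h i - h (Suc i))) - (-1) ^ N * h N + 2 * ((-1) ^ N * h N)"
      by (simp only: Suc.IH)
    also have "\<dots> = h 0 + ((\<Sum>i<N. (-1) ^ i * (h i - h (Suc i))) + (-1) ^ N * (h N - h (Suc N))) - (-1) ^ Suc N * h (Suc N)"
      by (simp add: algebra_simps)
    finally show ?case by simp
  qed simp
  have id: "(\<Sum>i<N. (-1) ^ i * h i) = (h 0 + (\<Sum>i<N. (-1) ^ i * (h i - h (Suc i))) - (-1) ^ N * h N) / 2" for N
  proof -
    have "(\<Sum>i<N. (-1) ^ i * h i) = (2 * (\<Sum>i<N. (-1) ^ i * h i)) / 2" by simp
    also have "\<dots> = (h 0 + (\<Sum>i<N. (-1) ^ i * (h i - h (Suc i))) - (-1) ^ N * h N) / 2" by (simp only: id2)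
    finally show ?thesis .
  qed
  have z: "(\<lambda>N. (-1) ^ N * h N) \<longlonglongrightarrow> 0"
    by (rule tendsto_norm_zero_cancel) (use tendsto_norm_zero[OF assms(1)] in \<open>simp add: norm_mult norm_power\<close>)
  have "(\<lambda>N. (h 0 + (\<Sum>i<N. (-1) ^ i * (h i - h (Suc i))) - (-1) ^ N * h N) / 2) \<longlonglongrightarrow> (h 0 + B - 0) / 2"
    using assms(2) z unfolding sums_def by (intro tendsto_intros) auto
  then have "(\<lambda>N. (h 0 + (\<Sum>i<N. (-1) ^ i * (h i - h (Suc i))) - (-1) ^ N * h N) / 2) \<longlonglongrightarrow> (h 0 + B) / 2"
    by (simp only: diff_zero)
  then show ?thesis unfolding sums_def id .
qed

lemma Sk_step:
  assumes "t > 0" "Re z + real k > 0"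
  shows "(\<lambda>n. (-1) ^ n * phi k z (real n + t)) sums ((phi k z t + Sk (Suc k) z t) / 2)"
proof -
  have "1 < Re z + real (Suc k)" using assms by simp
  then have "summable (\<lambda>n. norm ((-1) ^ n * phi (Suc k) z (real n + t)))"
    by (rule phi_norm_summable[OF assms(1)])
  then have "summable (\<lambda>n. (-1) ^ n * phi (Suc k) z (real n + t))"
    by (rule summable_norm_cancel)
  then have s: "(\<lambda>n. (-1) ^ n * phi (Suc k) z (real n + t)) sums Sk (Suc k) z t"
    unfolding Sk_def by (rule summable_sums)
  have "(\<lambda>n. (-1) ^ n * (phi k z (real n + t) - phi k z (real (Suc n) + t))) sums Sk (Suc k) z t"
    using s by (simp add: add_ac phi.simps(2))
  from alt_step[OF phi_lim0[OF assms] this] show ?thesis by simp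
qed

lemma GK_Suc:
  assumes "t > 0" "Re z + real K > 1"
  shows "GK (Suc K) z t = GK K z t"
proof -
  have e: "Sk K z t = (phi K z t + Sk (Suc K) z t) / 2"
    using sums_unique[OF Sk_step[OF assms(1), of z K]] assms unfolding Sk_def[of K] by auto
  have a: "(phi K z t + Sk (Suc K) z t) / 2 / 2 ^ K = phi K z t / 2 ^ (K + 1) + Sk (Suc K) z t / 2 ^ Suc K"
    by (simp add: add_divide_distrib)
  show ?thesis unfolding GK_def e a by simp
qed

lemma GK_mono:
  assumes "t > 0" "Re z + real K > 1"
  shows "GK (K + m) z t = GK K z t"
proof (induction m)
  case (Suc m)
  have "GK (Suc (K + m)) z t = GK (K + m) z t" using assms by (intro GK_Suc) auto
  then show ?case using Suc by simp
qed simp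

lemma GK_eq:
  assumes "t > 0" "Re z + real K > 1" "Re z + real K' > 1"
  shows "GK K z t = GK K' z t"
proof (cases "K \<le> K'")
  case True
  then show ?thesis using GK_mono[OF assms(1,2), of "K' - K"] by simp
next
  case False
  then show ?thesis using GK_mono[OF assms(1,3), of "K - K'"] by simp
qed

lemma series_GK1:
  assumes "t > 0" "Re z > 0"
  shows "(\<lambda>n. (-1) ^ n * of_real (real n + t) powr (-z)) sums GK 1 z t"
proof -
  have "(\<lambda>n. (-1) ^ n * phi 0 z (real n + t)) sums ((phi 0 z t + Sk 1 z t) / 2)"
    using Sk_step[OF assms(1), of z 0] assms by simp
  moreover have "(phi 0 z t + Sk 1 z t) / 2 = GK 1 z t" unfolding GK_def by (simp add: field_simps)
  ultimately show ?thesis by simp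
qed

lemma phi_holo: "(\<lambda>z. phi k z y) holomorphic_on S"
  by (induction k arbitrary: y) (auto simp: phi.simps(2) intro!: holomorphic_intros)

lemma open_halfRe: "open {z::complex. 1 < Re z + c}"
  by (intro open_Collect_less continuous_intros)

lemma Sk_holo:
  assumes "t > 0"
  shows "(\<lambda>z. Sk N z t) holomorphic_on {z. 1 < Re z + real N}"
proof -
  define S where "S = {z::complex. 1 < Re z + real N}"
  have oS: "open S" unfolding S_def by (rule open_halfRe)
  obtain g where g: "\<forall>x \<in> S. ((\<lambda>n. (-1) ^ n * phi N x (real n + t)) sums g x) \<and> g field_differentiable (at x)"
  proof (rule series_differentiable_comparison_complex[OF oS])
    fix n x assume "x \<in> S"
    show "(\<lambda>x. (-1) ^ n * phi N x (real n + t)) field_differentiable at x"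
      using holomorphic_on_imp_differentiable_at[OF phi_holo[of N "real n + t" UNIV] open_UNIV]
      by (intro field_differentiable_mult field_differentiable_const) auto
  next
    fix x assume x: "x \<in> S"
    define d where "d = (Re x + real N - 1) / 2"
    have d: "d > 0" using x unfolding S_def d_def by auto
    obtain C where C: "C \<ge> 0" "\<And>w y. norm w \<le> norm x + d \<Longrightarrow> y \<ge> t \<Longrightarrow> norm (phi N w y) \<le> C * y powr (-(Re w + real N))"
      using phi_bound[OF assms(1), of "norm x + d" N] by blast
    define h where "h n = complex_of_real (C * (real n + t) powr (-(1 + d)))" for n
    have "summable h" unfolding h_def summable_complex_of_real
      using summable_shift_powr[OF assms(1), of "1 + d"] d
      by (intro summable_mult) auto
    moreover have "range h \<subseteq> \<real>\<^sub>\<ge>\<^sub>0" unfolding h_def using C(1) by auto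
    moreover have "\<forall>\<^sub>F n in sequentially. \<forall>y\<in>ball x d \<inter> S. cmod ((-1) ^ n * phi N y (real n + t)) \<le> cmod (h n)"
      using eventually_ge_at_top[of "1::nat"]
    proof eventually_elim
      case (elim n)
      show ?case
      proof
        fix y assume y: "y \<in> ball x d \<inter> S"
        have dy: "norm (x - y) < d" using y by (auto simp: dist_norm)
        have ny: "norm y \<le> norm x + d" using dy norm_triangle_ineq3[of x y] using norm_triangle_ineq2[of y x] norm_minus_commute[of x y] by linarith
        have "\<bar>Re (x - y)\<bar> < d" using abs_Re_le_cmod[of "x-y"] dy by linarith
        then have "Re x - Re y < d" by (simp add: abs_less_iff)
        moreover have "2 * d = Re x + real N - 1" unfolding d_def by simp
        ultimately have ry: "Re y + real N \<ge> 1 + d" by linarith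
        have "cmod ((-1) ^ n * phi N y (real n + t)) = cmod (phi N y (real n + t))"
          by (simp add: norm_mult norm_power)
        also have "\<dots> \<le> C * (real n + t) powr (-(Re y + real N))"
          using C(2)[OF ny, of "real n + t"] assms by auto
        also have "\<dots> \<le> C * (real n + t) powr (-(1 + d))"
          using elim assms ry C(1) by (intro mult_left_mono powr_mono) auto
        also have "\<dots> = cmod (h n)" unfolding h_def norm_of_real using C(1) by (simp add: abs_mult)
        finally show "cmod ((-1) ^ n * phi N y (real n + t)) \<le> cmod (h n)" .
      qed
    qed
    ultimately show "\<exists>d h. 0 < d \<and> summable h \<and> range h \<subseteq> \<real>\<^sub>\<ge>\<^sub>0 \<and>
      (\<forall>\<^sub>F n in sequentially. \<forall>y\<in>ball x d \<inter> S. cmod ((-1) ^ n * phi N y (real n + t)) \<le> cmod (h n))"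
      using d by blast
  qed blast
  have "g holomorphic_on S"
    using g by (auto simp: holomorphic_on_def intro: field_differentiable_at_within)
  moreover have "\<And>z. z \<in> S \<Longrightarrow> Sk N z t = g z"
    using g unfolding Sk_def using sums_unique by metis
  ultimately show ?thesis unfolding S_def[symmetric]
    using holomorphic_transform[of g S "\<lambda>z. Sk N z t"] by auto
qed

lemma GK_holo:
  assumes "t > 0"
  shows "(\<lambda>z. GK N z t) holomorphic_on {z. 1 < Re z + real N}"
  unfolding GK_def using Sk_holo[OF assms, of N]
  by (intro holomorphic_intros phi_holo) auto

definition Kf :: "complex \<Rightarrow> nat" where "Kf z = nat \<lceil>1 - Re z\<rceil> + 1"
definition ZE :: "complex \<Rightarrow> real \<Rightarrow> complex" where "ZE z t = GK (Kf z) z t"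

lemma Kf_gt: "1 < Re z + real (Kf z)"
  unfolding Kf_def by linarith

lemma ZE_eq_GK:
  assumes "t > 0" "1 < Re z + real K"
  shows "ZE z t = GK K z t"
  unfolding ZE_def using GK_eq[OF assms(1) Kf_gt assms(2)] .

lemma ZE_holo:
  assumes "t > 0"
  shows "(\<lambda>z. ZE z t) holomorphic_on UNIV"
  unfolding holomorphic_on_def
proof
  fix z0 :: complex
  define U where "U = {z. 1 < Re z + real (Kf z0)}"
  have oU: "open U" unfolding U_def by (rule open_halfRe)
  have z0: "z0 \<in> U" unfolding U_def using Kf_gt[of z0] by simp
  have "(\<lambda>z. GK (Kf z0) z t) holomorphic_on U" unfolding U_def by (rule GK_holo[OF assms])
  moreover have "\<And>z. z \<in> U \<Longrightarrow> ZE z t = GK (Kf z0) z t"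
    unfolding U_def using ZE_eq_GK[OF assms] by auto
  ultimately have "(\<lambda>z. ZE z t) holomorphic_on U"
    using holomorphic_transform[of "\<lambda>z. GK (Kf z0) z t" U "\<lambda>z. ZE z t"] by auto
  then have "(\<lambda>z. ZE z t) field_differentiable at z0"
    using holomorphic_on_imp_differentiable_at[OF _ oU z0] by blast
  then show "(\<lambda>z. ZE z t) field_differentiable at z0 within UNIV" by simp
qed

lemma ZE_series:
  assumes "t > 0" "Re z > 0"
  shows "(\<lambda>n. (-1) ^ n * of_real (real n + t) powr (-z)) sums ZE z t"
  using series_GK1[OF assms] ZE_eq_GK[OF assms(1), of z 1] assms by simp

lemma zetaE_eq:
  assumes "t > 0"
  shows "zetaE z t = ZE z t"
proof -
  let ?P = "\<lambda>f. f holomorphic_on UNIV \<and>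
      (\<forall>w. 0 < Re w \<longrightarrow> (\<lambda>n. (-1) ^ n * (of_real (real n + t)) powr (- w)) sums f w)"
  have uniq: "f = (\<lambda>z. ZE z t)" if f: "?P f" for f
  proof
    fix z
    have o: "open {w::complex. 0 < Re w}" by (intro open_Collect_less continuous_intros)
    have ne: "{w::complex. 0 < Re w} \<noteq> {}" by (auto intro: exI[of _ 1])
    have eq: "\<And>w. w \<in> {w. 0 < Re w} \<Longrightarrow> f w = ZE w t"
      using f ZE_series[OF assms] sums_unique2 by blast
    show "f z = ZE z t"
      using analytic_continuation_open[OF o open_UNIV ne connected_UNIV subset_UNIV _ ZE_holo[OF assms] eq] f
      by blast
  qed
  have "(THE f. ?P f) = (\<lambda>z. ZE z t)"
    by (rule the_equality) (use ZE_holo[OF assms] ZE_series[OF assms] uniq in auto)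
  then show ?thesis unfolding zetaE_def by simp
qed



lemma vd_series:
  fixes f :: "nat \<Rightarrow> real \<Rightarrow> 'b::banach"
  assumes "convex S"
    and "\<And>n x. x \<in> S \<Longrightarrow> (f n has_vector_derivative f' n x) (at x within S)"
    and "uniform_limit S (\<lambda>n x. \<Sum>i<n. f' i x) g' sequentially"
    and "x0 \<in> S" "summable (\<lambda>n. f n x0)"
  shows "\<exists>g. \<forall>x\<in>S. (\<lambda>n. f n x) sums g x \<and> (g has_vector_derivative g' x) (at x within S)"
  unfolding has_vector_derivative_def
proof (rule has_derivative_series[OF assms(1)])
  show "\<And>n x. x \<in> S \<Longrightarrow> (f n has_derivative (\<lambda>h. h *\<^sub>R f' n x)) (at x within S)"
    using assms(2) unfolding has_vector_derivative_def by blast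
  show "\<forall>\<^sub>F n in sequentially. \<forall>x\<in>S. \<forall>h. norm ((\<Sum>i<n. h *\<^sub>R f' i x) - h *\<^sub>R g' x) \<le> e * norm h"
    if "e > 0" for e
  proof -
    from that assms(3) obtain N where N: "\<And>n x. n \<ge> N \<Longrightarrow> x \<in> S \<Longrightarrow> norm ((\<Sum>i<n. f' i x) - g' x) < e"
      unfolding uniform_limit_iff eventually_at_top_linorder dist_norm by blast
    have "norm ((\<Sum>i<n. h *\<^sub>R f' i x) - h *\<^sub>R g' x) \<le> e * norm h" if "n \<ge> N" "x \<in> S" for n x h
    proof -
      have "norm ((\<Sum>i<n. h *\<^sub>R f' i x) - h *\<^sub>R g' x) = \<bar>h\<bar> * norm ((\<Sum>i<n. f' i x) - g' x)"
        by (simp add: scaleR_sum_right[symmetric] scaleR_diff_right[symmetric])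
      also have "\<dots> \<le> \<bar>h\<bar> * e" using N[OF that] by (intro mult_left_mono) auto
      finally show ?thesis by (simp add: mult.commute)
    qed
    then show ?thesis unfolding eventually_at_top_linorder by blast
  qed
qed (use assms in auto)

lemma vd_of_quotient:
  fixes c :: "real \<Rightarrow> complex"
  assumes "((\<lambda>h. (c (q + h) - c q) / of_real h) \<longlongrightarrow> L) (at 0)"
  shows "(c has_vector_derivative L) (at q)"
  unfolding has_vector_derivative_def has_derivative_at
proof
  show "bounded_linear (\<lambda>h. h *\<^sub>R L)" by (rule bounded_linear_scaleR_left)
  have "((\<lambda>h. (c (q + h) - c q) / of_real h - L) \<longlongrightarrow> 0) (at 0)"
    using tendsto_diff[OF assms tendsto_const[of L]] by simp
  then have "((\<lambda>h. norm ((c (q + h) - c q) / of_real h - L)) \<longlongrightarrow> 0) (at 0)"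
    by (rule tendsto_norm_zero)
  moreover have "\<forall>\<^sub>F h in at 0. norm ((c (q + h) - c q) / of_real h - L) = norm (c (q + h) - c q - h *\<^sub>R L) / norm h"
    unfolding eventually_at_filter
  proof (intro always_eventually allI impI)
    fix h :: real assume "h \<noteq> 0"
    have "(c (q + h) - c q) / of_real h - L = (c (q + h) - c q - h *\<^sub>R L) / of_real h"
      using \<open>h \<noteq> 0\<close> by (simp add: field_simps scaleR_conv_of_real)
    then show "norm ((c (q + h) - c q) / of_real h - L) = norm (c (q + h) - c q - h *\<^sub>R L) / norm h"
      by (simp add: norm_divide)
  qed
  ultimately show "((\<lambda>h. norm (c (q + h) - c q - h *\<^sub>R L) / norm h) \<longlongrightarrow> 0) (at 0)"
    by (rule Lim_transform_eventually)
qed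

lemma phi_shift_vd:
  assumes "real n + t > 0"
  shows "((\<lambda>t. phi k z (real n + t)) has_vector_derivative (-z * phi k (z+1) (real n + t))) (at t)"
proof -
  have "((\<lambda>t::real. real n + t) has_real_derivative 1) (at t)" by (auto intro!: derivative_eq_intros)
  then have "((\<lambda>t::real. real n + t) has_vector_derivative 1) (at t)"
    by (simp add: has_real_derivative_iff_has_vector_derivative)
  from vector_diff_chain_at[OF this phi_vd[OF assms, of k z]] show ?thesis by (simp add: o_def)
qed

lemma Sk1_vd:
  assumes "t0 > 0" "Re z > 0"
  shows "((\<lambda>t. Sk 1 z t) has_vector_derivative (-z * Sk 1 (z+1) t0)) (at t0)"
proof -
  define S where "S = ball t0 (t0/2)"
  have oS: "open S" and cS: "convex S" and t0S: "t0 \<in> S" unfolding S_def using assms by auto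
  have Spos: "t \<ge> t0/2" if "t \<in> S" for t
  proof -
    have "dist t0 t < t0/2" using that unfolding S_def by simp
    then have "\<bar>t0 - t\<bar> < t0/2" by (simp only: dist_real_def)
    then show ?thesis by linarith
  qed
  define f where "f n t = (-1) ^ n * phi 1 z (real n + t)" for n t
  define f' where "f' n t = (-1) ^ n * (-z * phi 1 (z+1) (real n + t))" for n t
  obtain C where C: "C \<ge> 0" "\<And>w y. norm w \<le> norm z + 1 \<Longrightarrow> y \<ge> t0/2 \<Longrightarrow> norm (phi 1 w y) \<le> C * y powr (-(Re w + real 1))"
    using phi_bound[OF half_gt_zero[OF assms(1)], of "norm z + 1" 1] by blast
  define M where "M n = norm z * C * (real n + t0/2) powr (-(Re z + 2))" for n
  have ul: "uniform_limit S (\<lambda>n x. \<Sum>i<n. f' i x) (\<lambda>x. \<Sum>i. f' i x) sequentially"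
  proof (rule Weierstrass_m_test)
    show "summable M" unfolding M_def using summable_shift_powr[of "t0/2" "Re z + 2"] assms
      by (intro summable_mult) auto
    fix n x assume x: "x \<in> S"
    have nz1: "norm (z + 1) \<le> norm z + 1" by (rule order_trans[OF norm_triangle_ineq]) simp
    have e: "Re (z+1) + real 1 = Re z + 2" by simp
    have pw: "(real n + x) powr (-(Re z + 2)) \<le> (real n + t0/2) powr (-(Re z + 2))"
      using Spos[OF x] assms by (intro powr_mono2') auto
    have "norm (f' n x) = norm z * norm (phi 1 (z+1) (real n + x))"
      unfolding f'_def by (simp add: norm_mult norm_power)
    also have "\<dots> \<le> norm z * (C * (real n + x) powr (-(Re (z+1) + real 1)))"
      using C(2)[OF nz1, of "real n + x"] Spos[OF x] by (intro mult_left_mono) auto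
    also have "\<dots> = norm z * (C * (real n + x) powr (-(Re z + 2)))" by (simp only: e)
    also have "\<dots> \<le> M n"
      unfolding M_def using C(1) pw by (simp add: mult_left_mono mult.assoc)
    finally show "norm (f' n x) \<le> M n" .
  qed
  have "1 < Re z + real 1" using assms by simp
  then have "summable (\<lambda>n. norm ((-1) ^ n * phi 1 z (real n + t0)))" by (rule phi_norm_summable[OF assms(1)])
  then have sm: "summable (\<lambda>n. f n t0)" unfolding f_def by (rule summable_norm_cancel)
  have der: "(f n has_vector_derivative f' n x) (at x within S)" if x: "x \<in> S" for n x
  proof -
    have "real n + x > 0" using Spos[OF x] assms by simp
    then have "((\<lambda>t. (-1) ^ n * phi 1 z (real n + t)) has_vector_derivative ((-1) ^ n * (-z * phi 1 (z+1) (real n + x)))) (at x)"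
      by (intro has_vector_derivative_mult_right phi_shift_vd)
    then have "(f n has_vector_derivative f' n x) (at x)"
      unfolding f_def f'_def by simp
    then show ?thesis by (rule has_vector_derivative_at_within)
  qed
  obtain g where g: "\<forall>x\<in>S. (\<lambda>n. f n x) sums g x \<and> (g has_vector_derivative (\<Sum>i. f' i x)) (at x within S)"
    using vd_series[OF cS der ul t0S sm] by blast
  have "(g has_vector_derivative (\<Sum>i. f' i t0)) (at t0 within S)"
    using g t0S by blast
  then have "(g has_vector_derivative (\<Sum>i. f' i t0)) (at t0)"
    by (simp add: at_within_open[OF t0S oS])
  moreover have "(\<Sum>i. f' i t0) = -z * Sk 1 (z+1) t0"
  proof -
    have "1 < Re (z+1) + real 1" using assms by simp
    then have "summable (\<lambda>n. norm ((-1) ^ n * phi 1 (z+1) (real n + t0)))" by (rule phi_norm_summable[OF assms(1)])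
    then have s1: "summable (\<lambda>n. (-1) ^ n * phi 1 (z+1) (real n + t0))" by (rule summable_norm_cancel)
    have "(\<Sum>i. f' i t0) = (\<Sum>i. -z * ((-1) ^ i * phi 1 (z+1) (real i + t0)))"
      unfolding f'_def by (simp only: mult.left_commute)
    also have "\<dots> = -z * Sk 1 (z+1) t0"
      unfolding Sk_def by (rule suminf_mult[OF s1])
    finally show ?thesis .
  qed
  moreover have "\<And>x. x \<in> S \<Longrightarrow> g x = Sk 1 z x"
    using g unfolding Sk_def f_def using sums_unique by metis
  ultimately show ?thesis
    using has_vector_derivative_transform_within_open[OF _ oS t0S, of g "-z * Sk 1 (z+1) t0" "\<lambda>t. Sk 1 z t"]
    by simp
qed

lemma ZE_GK1:
  assumes "t > 0" "Re z > 0"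
  shows "ZE z t = phi 0 z t / 2 + Sk 1 z t / 2"
  using ZE_eq_GK[OF assms(1), of z 1] assms unfolding GK_def by simp

lemma ZE_vd:
  assumes "t0 > 0" "Re z > 0"
  shows "((\<lambda>t. ZE z t) has_vector_derivative (-z * ZE (z+1) t0)) (at t0)"
proof -
  have "((\<lambda>t. phi 0 z t / 2 + Sk 1 z t / 2) has_vector_derivative
          ((-z * phi 0 (z+1) t0) / 2 + (-z * Sk 1 (z+1) t0) / 2)) (at t0)"
    by (intro has_vector_derivative_add has_vector_derivative_divide phi_vd Sk1_vd assms)
  moreover have "(-z * phi 0 (z+1) t0) / 2 + (-z * Sk 1 (z+1) t0) / 2 = -z * ZE (z+1) t0"
    using ZE_GK1[OF assms(1), of "z+1"] assms by (simp add: field_simps)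
  ultimately have "((\<lambda>t. phi 0 z t / 2 + Sk 1 z t / 2) has_vector_derivative (-z * ZE (z+1) t0)) (at t0)"
    by simp
  then show ?thesis
    by (rule has_vector_derivative_transform_within_open[of _ _ _ "{0<..}"])
       (use assms ZE_GK1 in auto)
qed



lemma interchange:
  fixes F F' F'' :: "complex \<Rightarrow> real \<Rightarrow> complex"
  assumes A: "open A" "w \<in> A" and dpos: "\<delta> > 0"
    and hol: "\<And>t. t \<in> cball q \<delta> \<Longrightarrow> (\<lambda>z. F z t) holomorphic_on A"
    and d1: "\<And>z t. z \<in> A \<Longrightarrow> t \<in> cball q \<delta> \<Longrightarrow> ((\<lambda>t. F z t) has_vector_derivative F' z t) (at t)"
    and d2: "\<And>z t. z \<in> A \<Longrightarrow> t \<in> cball q \<delta> \<Longrightarrow> ((\<lambda>t. F' z t) has_vector_derivative F'' z t) (at t)"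
    and bd: "\<And>z t. z \<in> A \<Longrightarrow> t \<in> cball q \<delta> \<Longrightarrow> norm (F'' z t) \<le> M"
  shows "((\<lambda>t. (deriv ^^ j) (\<lambda>z. F z t) w) has_vector_derivative (deriv ^^ j) (\<lambda>z. F' z q) w) (at q)"
proof -
  define D where "D h z = (F z (q + h) - F z q) / of_real h" for h z
  have qc: "q \<in> cball q \<delta>" using dpos by simp
  have M0: "M \<ge> 0" using bd[OF A(2) qc] norm_ge_zero[of "F'' w q"] by linarith
  have key: "norm (D h z - F' z q) \<le> 3 * M * \<bar>h\<bar>" if z: "z \<in> A" and h: "h \<noteq> 0" "\<bar>h\<bar> \<le> \<delta>" for h z
  proof -
    have F'lip: "norm (F' z s - F' z q) \<le> 3 * M * \<bar>s - q\<bar>" if s: "s \<in> cball q \<delta>" for s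
    proof -
      have "norm (F' z s - F' z q) \<le> 3 * M * norm (s - q)"
      proof (rule mvt_vec[where S="cball q \<delta>" and f'="\<lambda>t. F'' z t"])
        show "\<And>x. x \<in> cball q \<delta> \<Longrightarrow> ((\<lambda>t. F' z t) has_vector_derivative F'' z x) (at x within cball q \<delta>)"
          using d2[OF z] has_vector_derivative_at_within by blast
        show "closed_segment q s \<subseteq> cball q \<delta>"
          using qc s by (intro closed_segment_subset) auto
        show "\<And>x. x \<in> cball q \<delta> \<Longrightarrow> norm (F'' z x) \<le> M" using bd[OF z] by blast
      qed (rule qc)
      then show ?thesis by simp
    qed
    have sub: "cball q \<bar>h\<bar> \<subseteq> cball q \<delta>" using h by auto
    have "norm (F z (q + h) - F z q - ((q + h) - q) *\<^sub>R F' z q) \<le> norm ((q + h) - q) * (3 * M * \<bar>h\<bar>)"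
    proof (rule vector_differentiable_bound_linearization[where S="cball q \<bar>h\<bar>" and f="\<lambda>t. F z t" and f'="\<lambda>t. F' z t"])
      show "\<And>x. x \<in> cball q \<bar>h\<bar> \<Longrightarrow> ((\<lambda>t. F z t) has_vector_derivative F' z x) (at x within cball q \<bar>h\<bar>)"
        using d1[OF z] sub has_vector_derivative_at_within by blast
      show "closed_segment q (q + h) \<subseteq> cball q \<bar>h\<bar>"
        by (intro closed_segment_subset) (auto simp: dist_real_def)
      show "q \<in> cball q \<bar>h\<bar>" by simp
      fix x assume x: "x \<in> cball q \<bar>h\<bar>"
      have "norm (F' z x - F' z q) \<le> 3 * M * \<bar>x - q\<bar>" using F'lip sub x by blast
      also have "\<dots> \<le> 3 * M * \<bar>h\<bar>" using x M0 by (intro mult_left_mono) (auto simp: dist_real_def)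
      finally show "norm (F' z x - F' z q) \<le> 3 * M * \<bar>h\<bar>" .
    qed
    then have n1: "norm (F z (q + h) - F z q - h *\<^sub>R F' z q) \<le> \<bar>h\<bar> * (3 * M * \<bar>h\<bar>)" by simp
    have "D h z - F' z q = (F z (q + h) - F z q - h *\<^sub>R F' z q) / of_real h"
      unfolding D_def using h by (simp add: field_simps scaleR_conv_of_real)
    then have "norm (D h z - F' z q) = norm (F z (q + h) - F z q - h *\<^sub>R F' z q) / \<bar>h\<bar>"
      by (simp add: norm_divide)
    also have "\<dots> \<le> (\<bar>h\<bar> * (3 * M * \<bar>h\<bar>)) / \<bar>h\<bar>"
      using n1 by (intro divide_right_mono) auto
    also have "\<dots> = 3 * M * \<bar>h\<bar>" using h by simp
    finally show ?thesis .
  qed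
  have ul: "uniform_limit A D (\<lambda>z. F' z q) (at 0)"
  proof (rule uniform_limitI)
    fix e :: real assume e: "e > 0"
    define d where "d = min \<delta> (e / (3 * M + 1))"
    have d: "d > 0" unfolding d_def using e dpos M0 by auto
    have *: "\<forall>z\<in>A. dist (D h z) (F' z q) < e" if hz: "h \<noteq> 0" "\<bar>h\<bar> < d" for h
    proof
      fix z assume z: "z \<in> A"
      have "dist (D h z) (F' z q) \<le> 3 * M * \<bar>h\<bar>"
        using key[OF z hz(1)] hz unfolding d_def dist_norm by auto
      also have "\<dots> \<le> (3 * M + 1) * \<bar>h\<bar>" by (simp add: distrib_right)
      also have "\<dots> < (3 * M + 1) * (e / (3 * M + 1))"
        using hz M0 unfolding d_def by (intro mult_strict_left_mono) auto
      also have "\<dots> = e" using M0 by simp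
      finally show "dist (D h z) (F' z q) < e" .
    qed
    show "\<forall>\<^sub>F h in at 0. \<forall>z\<in>A. dist (D h z) (F' z q) < e"
      unfolding eventually_at using d * by (intro exI[of _ d]) (auto simp: dist_real_def)
  qed
  have *: "D h holomorphic_on A" if h: "h \<noteq> 0" "\<bar>h\<bar> < \<delta>" for h
  proof -
    have qh: "q + h \<in> cball q \<delta>" using h by (auto simp: dist_real_def)
    show "D h holomorphic_on A"
      unfolding D_def using hol[OF qh] hol[OF qc] by (intro holomorphic_intros) auto
  qed
  have hol_ev: "\<forall>\<^sub>F h in at 0. D h holomorphic_on A"
    unfolding eventually_at using dpos * by (intro exI[of _ \<delta>]) (auto simp: dist_real_def)
  have lim: "((\<lambda>h. (deriv ^^ j) (D h) w) \<longlongrightarrow> (deriv ^^ j) (\<lambda>z. F' z q) w) (at 0)"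
    by (rule higher_deriv_complex_uniform_limit[OF ul hol_ev _ A]) simp
  define c where "c t = (deriv ^^ j) (\<lambda>z. F z t) w" for t
  have *: "(deriv ^^ j) (D h) w = (c (q + h) - c q) / of_real h" if h: "h \<noteq> 0" "\<bar>h\<bar> < \<delta>" for h
  proof -
    have qh: "q + h \<in> cball q \<delta>" using h by (auto simp: dist_real_def)
    have Dh: "D h = (\<lambda>z. (1 / of_real h) * (F z (q + h) - F z q))"
      unfolding D_def by (auto simp: divide_inverse mult.commute)
    have hd: "(\<lambda>z. F z (q + h) - F z q) holomorphic_on A"
      using hol[OF qh] hol[OF qc] by (rule holomorphic_on_diff)
    have "(deriv ^^ j) (D h) w = (1 / of_real h) * (deriv ^^ j) (\<lambda>z. F z (q + h) - F z q) w"
      unfolding Dh by (rule higher_deriv_cmult[OF hd A(2) A(1)])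
    also have "(deriv ^^ j) (\<lambda>z. F z (q + h) - F z q) w = c (q + h) - c q"
      unfolding c_def by (rule higher_deriv_diff[OF hol[OF qh] hol[OF qc] A])
    finally show "(deriv ^^ j) (D h) w = (c (q + h) - c q) / of_real h" by simp
  qed
  have ev: "\<forall>\<^sub>F h in at 0. (deriv ^^ j) (D h) w = (c (q + h) - c q) / of_real h"
    unfolding eventually_at using dpos * by (intro exI[of _ \<delta>]) (auto simp: dist_real_def)
  have "((\<lambda>h. (c (q + h) - c q) / of_real h) \<longlongrightarrow> (deriv ^^ j) (\<lambda>z. F' z q) w) (at 0)"
    by (rule Lim_transform_eventually[OF lim ev])
  from vd_of_quotient[OF this] show ?thesis unfolding c_def .
qed

lemma ZE_bound:
  assumes "a > 0"
  shows "\<exists>M\<ge>0. \<forall>w t. 5/2 \<le> Re w \<longrightarrow> Re w \<le> 4 \<longrightarrow> a \<le> t \<longrightarrow> norm (ZE w t) \<le> M"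
proof -
  define g where "g n = (real n + a) powr (-(5/2)) + (real n + a) powr (-4)" for n
  have sg: "summable g" unfolding g_def
    using summable_shift_powr[OF assms, of "5/2"] summable_shift_powr[OF assms, of 4]
    by (intro summable_add) auto
  have "norm (ZE w t) \<le> suminf g" if w: "5/2 \<le> Re w" "Re w \<le> 4" and t: "a \<le> t" for w t
  proof -
    have tp: "t > 0" using t assms by simp
    have "ZE w t = (\<Sum>n. (-1) ^ n * of_real (real n + t) powr (-w))"
      using sums_unique[OF ZE_series[OF tp, of w]] w by simp
    also have "norm \<dots> \<le> suminf g"
    proof (rule norm_suminf_le[OF _ sg])
      fix n
      define y where "y = real n + t"
      have y: "y \<ge> real n + a" "y > 0" unfolding y_def using t assms by auto
      have e2: "norm (of_real y powr (-w) :: complex) = y powr (-Re w)"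
        using y by (simp add: norm_powr_real_powr)
      have "norm ((-1) ^ n * of_real (real n + t) powr (-w)) = norm (of_real y powr (-w) :: complex)"
        unfolding y_def[symmetric] by (simp add: norm_mult norm_power)
      also have "\<dots> = y powr (-Re w)" by (rule e2)
      also have "\<dots> \<le> y powr (-(5/2)) + y powr (-4)"
      proof (cases "y \<ge> 1")
        case True
        then have "y powr (-Re w) \<le> y powr (-(5/2))" using w by (intro powr_mono) auto
        then show ?thesis by (smt (verit) powr_ge_zero)
      next
        case False
        then have "y powr (-Re w) \<le> y powr (-4)" using w y by (intro powr_mono') auto
        then show ?thesis by (smt (verit) powr_ge_zero)
      qed
      also have "\<dots> \<le> g n" unfolding g_def using y assms by (intro add_mono powr_mono2') auto
      finally show "norm ((-1) ^ n * of_real (real n + t) powr (-w)) \<le> g n" .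
    qed
    finally show ?thesis .
  qed
  moreover have "suminf g \<ge> 0" using sg by (rule suminf_nonneg) (simp add: g_def)
  ultimately show ?thesis by blast
qed

lemma ZE_higher_deriv_q:
  assumes "q > 0"
  shows "((\<lambda>t. (deriv ^^ j) (\<lambda>z. ZE z t) 1) has_vector_derivative (deriv ^^ j) (\<lambda>z. -z * ZE (z+1) q) 1) (at q)"
proof -
  define A where "A = ball (1::complex) (1/2)"
  have A: "open A" "1 \<in> A" unfolding A_def by auto
  have reA: "1/2 < Re z \<and> Re z < 3/2 \<and> norm z \<le> 3/2" if "z \<in> A" for z
  proof -
    have d: "norm (1 - z) < 1/2" using that unfolding A_def by (simp add: dist_norm)
    have "\<bar>Re (1 - z)\<bar> < 1/2" using abs_Re_le_cmod[of "1-z"] d by linarith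
    then have r: "Re (1 - z) < 1/2" "- Re (1 - z) < 1/2" using abs_less_iff by blast+
    have "norm z \<le> norm (1::complex) + norm (1 - z)" using norm_triangle_ineq4[of 1 "1-z"] by simp
    then show ?thesis using d r by simp
  qed
  have q2: "q/2 > 0" using assms by simp
  have tpos: "t > 0 \<and> q/2 \<le> t" if "t \<in> cball q (q/2)" for t
  proof -
    have "\<bar>q - t\<bar> \<le> q/2" using that by (simp add: dist_real_def)
    then have "q - t \<le> q/2" using abs_le_iff by blast
    then show ?thesis using assms by simp
  qed
  obtain M where M: "M \<ge> 0" "\<And>w t. 5/2 \<le> Re w \<Longrightarrow> Re w \<le> 4 \<Longrightarrow> q/2 \<le> t \<Longrightarrow> norm (ZE w t) \<le> M"
    using ZE_bound[OF q2] by blast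
  show ?thesis
  proof (rule interchange[OF A q2, where F''="\<lambda>z t. -z * (-(z+1) * ZE (z+1+1) t)" and M="4 * M"])
    show "\<And>t. t \<in> cball q (q/2) \<Longrightarrow> (\<lambda>z. ZE z t) holomorphic_on A"
      using ZE_holo tpos holomorphic_on_subset by blast
    fix z t assume z: "z \<in> A" and t: "t \<in> cball q (q/2)"
    have rz: "0 < Re z" using reA[OF z] by simp
    show "((\<lambda>t. ZE z t) has_vector_derivative -z * ZE (z+1) t) (at t)"
      by (rule ZE_vd[OF tpos[OF t, THEN conjunct1] rz])
    have rz1: "0 < Re (z+1)" using rz by simp
    show "((\<lambda>t. -z * ZE (z+1) t) has_vector_derivative -z * (-(z+1) * ZE (z+1+1) t)) (at t)"
      by (intro has_vector_derivative_mult_right ZE_vd[OF tpos[OF t, THEN conjunct1] rz1])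
    have "norm (-z * (-(z+1) * ZE (z+1+1) t)) = norm z * (norm (z+1) * norm (ZE (z+1+1) t))"
      by (simp only: norm_mult norm_minus_cancel)
    also have "\<dots> \<le> (3/2) * ((5/2) * M)"
    proof (intro mult_mono)
      show "norm z \<le> 3/2" using reA[OF z] by simp
      show "norm (z+1) \<le> 5/2" using reA[OF z] norm_triangle_ineq[of z 1] by simp
      show "norm (ZE (z+1+1) t) \<le> M" using reA[OF z] tpos[OF t] by (intro M(2)) auto
    qed (use M in auto)
    also have "\<dots> \<le> 4 * M" using M by simp
    finally show "norm (-z * (-(z+1) * ZE (z+1+1) t)) \<le> 4 * M" .
  qed
qed



lemma hderiv_at:
  assumes "g holomorphic_on UNIV"
  shows "((deriv ^^ n) g has_field_derivative (deriv ^^ Suc n) g x) (at x)"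
  using has_field_derivative_higher_deriv[OF assms open_UNIV] by blast

lemma hd_shift:
  assumes "g holomorphic_on UNIV"
  shows "(deriv ^^ j) (\<lambda>z. g (z + 1)) = (\<lambda>w. (deriv ^^ j) g (w + 1))"
proof (induction j)
  case 0
  then show ?case by simp
next
  case (Suc j)
  show ?case
  proof
    fix w
    have d1: "((\<lambda>z::complex. z + 1) has_field_derivative 1) (at w)" by (auto intro!: derivative_eq_intros)
    have "((\<lambda>z. (deriv ^^ j) g (z + 1)) has_field_derivative (deriv ^^ Suc j) g (w + 1)) (at w)"
      using DERIV_chain2[where f="(deriv ^^ j) g" and g="\<lambda>z. z + 1", OF _ d1]
        hderiv_at[OF assms, of j "w+1"] by simp
    then show "(deriv ^^ Suc j) (\<lambda>z. g (z + 1)) w = (deriv ^^ Suc j) g (w + 1)"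
      using Suc.IH by (simp add: DERIV_imp_deriv)
  qed
qed

lemma hd_mult_z:
  assumes "g holomorphic_on UNIV"
  shows "(deriv ^^ j) (\<lambda>z. z * g z) = (\<lambda>w. w * (deriv ^^ j) g w + of_nat j * (deriv ^^ (j - 1)) g w)"
proof (induction j)
  case 0
  then show ?case by simp
next
  case (Suc j)
  show ?case
  proof
    fix w
    have e: "1 * (deriv ^^ j) g w + w * (deriv ^^ Suc j) g w + of_nat j * (deriv ^^ Suc (j - 1)) g w =
             w * (deriv ^^ Suc j) g w + of_nat (Suc j) * (deriv ^^ (Suc j - 1)) g w"
    proof (cases j)
      case 0
      then show ?thesis by simp
    next
      case (Suc i)
      then show ?thesis by (simp add: algebra_simps)
    qed
    have "((\<lambda>w. w * (deriv ^^ j) g w + of_nat j * (deriv ^^ (j - 1)) g w) has_field_derivative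
            (1 * (deriv ^^ j) g w + w * (deriv ^^ Suc j) g w + of_nat j * (deriv ^^ Suc (j - 1)) g w)) (at w)"
    proof (rule DERIV_add)
      show "((\<lambda>w. w * (deriv ^^ j) g w) has_field_derivative 1 * (deriv ^^ j) g w + w * (deriv ^^ Suc j) g w) (at w)"
        using DERIV_mult[OF DERIV_ident hderiv_at[OF assms, of j w]] by (simp add: mult.commute)
      show "((\<lambda>w. of_nat j * (deriv ^^ (j - 1)) g w) has_field_derivative of_nat j * (deriv ^^ Suc (j - 1)) g w) (at w)"
        by (rule DERIV_cmult[OF hderiv_at[OF assms]])
    qed
    then have "((\<lambda>w. w * (deriv ^^ j) g w + of_nat j * (deriv ^^ (j - 1)) g w) has_field_derivative
            (w * (deriv ^^ Suc j) g w + of_nat (Suc j) * (deriv ^^ (Suc j - 1)) g w)) (at w)"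
      using e by (rule DERIV_cong)
    then show "(deriv ^^ Suc j) (\<lambda>z. z * g z) w = w * (deriv ^^ Suc j) g w + of_nat (Suc j) * (deriv ^^ (Suc j - 1)) g w"
      using Suc.IH by (simp add: DERIV_imp_deriv)
  qed
qed

lemma taylor2:
  assumes "g holomorphic_on UNIV"
  shows "(\<lambda>n. (deriv ^^ (n + m)) g 1 / fact n) sums (deriv ^^ m) g 2"
proof -
  have "(deriv ^^ m) g holomorphic_on ball 1 2"
    using holomorphic_higher_deriv[OF assms open_UNIV] holomorphic_on_subset by blast
  from holomorphic_power_series[OF this, of 2]
  have "(\<lambda>n. (deriv ^^ n) ((deriv ^^ m) g) 1 / fact n * (2 - 1) ^ n) sums (deriv ^^ m) g 2"
    by (simp add: dist_norm)
  moreover have "(deriv ^^ n) ((deriv ^^ m) g) = (deriv ^^ (n + m)) g" for n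
    by (simp add: funpow_add)
  ultimately show ?thesis by simp
qed

lemma gt_eq:
  assumes "x > 0"
  shows "gamma_tilde k x = (-1) ^ k * (deriv ^^ k) (\<lambda>z. ZE z x) 1"
  unfolding gamma_tilde_def using zetaE_eq[OF assms] by simp

lemma gt_vd:
  assumes "q > 0"
  shows "((\<lambda>x. gamma_tilde j x) has_vector_derivative ((-1) ^ j * (deriv ^^ j) (\<lambda>z. -z * ZE (z+1) q) 1)) (at q)"
proof -
  have "((\<lambda>t. (-1) ^ j * (deriv ^^ j) (\<lambda>z. ZE z t) 1) has_vector_derivative ((-1) ^ j * (deriv ^^ j) (\<lambda>z. -z * ZE (z+1) q) 1)) (at q)"
    by (intro has_vector_derivative_mult_right ZE_higher_deriv_q assms)
  then show ?thesis
    by (rule has_vector_derivative_transform_within_open[of _ _ _ "{0<..}"]) (use assms gt_eq in auto)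
qed

lemma key_identity:
  assumes "q > 0"
  shows "(deriv ^^ j) (\<lambda>z. -z * ZE (z+1) q) 1 = -((deriv ^^ j) (\<lambda>z. ZE z q) 2 + of_nat j * (deriv ^^ (j - 1)) (\<lambda>z. ZE z q) 2)"
proof -
  define g where "g = (\<lambda>z. ZE z q)"
  define G where "G = (\<lambda>z. g (z + 1))"
  have hg: "g holomorphic_on UNIV" unfolding g_def by (rule ZE_holo[OF assms])
  have hG: "G holomorphic_on UNIV"
  proof -
    have "(g \<circ> (\<lambda>z. z + 1)) holomorphic_on UNIV"
      by (rule holomorphic_on_compose) (auto intro!: holomorphic_intros intro: holomorphic_on_subset[OF hg])
    then show ?thesis unfolding G_def by (simp add: o_def)
  qed
  have hzG: "(\<lambda>z. z * G z) holomorphic_on UNIV" using hG by (intro holomorphic_intros) auto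
  have "(\<lambda>z. -z * ZE (z+1) q) = (\<lambda>z. (-1) * (z * G z))" unfolding G_def g_def by auto
  then have "(deriv ^^ j) (\<lambda>z. -z * ZE (z+1) q) 1 = (-1) * (deriv ^^ j) (\<lambda>z. z * G z) 1"
    using higher_deriv_cmult[OF hzG, of 1 j "-1"] by simp
  also have "(deriv ^^ j) (\<lambda>z. z * G z) 1 = 1 * (deriv ^^ j) G 1 + of_nat j * (deriv ^^ (j - 1)) G 1"
    using hd_mult_z[OF hG, of j] by simp
  finally have e: "(deriv ^^ j) (\<lambda>z. -z * ZE (z+1) q) 1 = (-1) * (1 * (deriv ^^ j) G 1 + of_nat j * (deriv ^^ (j - 1)) G 1)" .
  have sh: "(deriv ^^ k) G 1 = (deriv ^^ k) g 2" for k
    unfolding G_def using hd_shift[OF hg, of k] by simp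
  show ?thesis unfolding e sh unfolding g_def by simp
qed

lemma binom_term:
  fixes c :: complex
  shows "(-1) ^ (n + p) / fact (n + p) * of_nat ((n + p + 1) choose Suc p) * ((-1) ^ (n + p) * c)
       = (of_nat n * (c / fact n) + of_nat (Suc p) * (c / fact n)) / fact (Suc p)"
proof -
  have b: "(of_nat ((n + p + 1) choose Suc p) :: complex) = fact (n + p + 1) / (fact (Suc p) * fact n)"
    using binomial_fact[of "Suc p" "n + p + 1"] by simp
  have f: "(fact (n + p + 1) :: complex) = of_nat (n + p + 1) * fact (n + p)"
    by (simp add: fact_Suc)
  have "(-1) ^ (n + p) / fact (n + p) * of_nat ((n + p + 1) choose Suc p) * ((-1) ^ (n + p) * c)
      = ((-1) ^ (n + p) * (-1) ^ (n + p)) * (of_nat ((n + p + 1) choose Suc p) / fact (n + p) * c)"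
    by (simp add: field_simps)
  also have "\<dots> = of_nat (n + p + 1) * c / (fact (Suc p) * fact n)"
  proof -
    have F: "(fact (n + p) :: complex) \<noteq> 0" by simp
    have "(of_nat (n + p + 1) * fact (n + p)) / (fact (Suc p) * fact n) / fact (n + p)
          = (of_nat (n + p + 1) :: complex) / (fact (Suc p) * fact n)"
      using F by (simp add: divide_divide_eq_left)
    then show ?thesis unfolding minus_one_mult_self b f by simp
  qed
  also have "\<dots> = (of_nat n * (c / fact n) + of_nat (Suc p) * (c / fact n)) / fact (Suc p)"
    by (simp add: field_simps)
  finally show ?thesis .
qed

theorem proposition3p23:
  fixes q :: real
  assumes "q > 0"
  shows "(\<forall>j::nat. j \<ge> 1 \<longrightarrow>
           (\<exists>D L. ((\<lambda>x. gamma_tilde j x) has_vector_derivative D) (at q) \<and>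
              (\<lambda>n. (-1) ^ (n + (j - 1)) / fact (n + (j - 1))
                     * of_nat ((n + (j - 1) + 1) choose j) * gamma_tilde (n + (j - 1)) q) sums L \<and>
              (-1) ^ j / fact j * D = - L))
       \<and> (\<exists>D L. (psi_tilde has_vector_derivative D) (at q) \<and>
              (\<lambda>k. (-1) ^ k / fact k * gamma_tilde k q) sums L \<and>
              - D = - L)"
proof
  define g where "g = (\<lambda>z. ZE z q)"
  have hg: "g holomorphic_on UNIV" unfolding g_def by (rule ZE_holo[OF assms])
  define c where "c k = (deriv ^^ k) g 1" for k
  have gt: "gamma_tilde k q = (-1) ^ k * c k" for k
    unfolding c_def g_def by (rule gt_eq[OF assms])
  show "\<forall>j::nat. j \<ge> 1 \<longrightarrow>
           (\<exists>D L. ((\<lambda>x. gamma_tilde j x) has_vector_derivative D) (at q) \<and>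
              (\<lambda>n. (-1) ^ (n + (j - 1)) / fact (n + (j - 1))
                     * of_nat ((n + (j - 1) + 1) choose j) * gamma_tilde (n + (j - 1)) q) sums L \<and>
              (-1) ^ j / fact j * D = - L)"
  proof (intro allI impI)
    fix j :: nat assume j: "j \<ge> 1"
    then obtain p where jp: "j = Suc p" by (cases j) auto
    define A where "A = (deriv ^^ j) g 2"
    define B where "B = (deriv ^^ p) g 2"
    define D where "D = (-1) ^ j * (deriv ^^ j) (\<lambda>z. -z * ZE (z+1) q) 1"
    define L where "L = (A + of_nat j * B) / fact j"
    have dD: "((\<lambda>x. gamma_tilde j x) has_vector_derivative D) (at q)"
      unfolding D_def by (rule gt_vd[OF assms])
    have Dval: "D = (-1) ^ j * (-(A + of_nat j * B))"
      unfolding D_def key_identity[OF assms] A_def B_def g_def jp by simp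
    have s1: "(\<lambda>n. c (n + p) / fact n) sums B"
      unfolding c_def B_def by (rule taylor2[OF hg])
    have s2: "(\<lambda>n. c (n + Suc p) / fact n) sums A"
      unfolding c_def A_def jp by (rule taylor2[OF hg])
    have s2': "(\<lambda>n. of_nat n * (c (n + p) / fact n)) sums A"
    proof -
      have fs: "of_nat (Suc n) * (x / fact (Suc n)) = (x / fact n :: complex)" for n x
      proof -
        have "(of_nat (Suc n) :: complex) \<noteq> 0" by (simp only: of_nat_eq_0_iff)
        then show ?thesis unfolding fact_Suc by (simp del: of_nat_Suc)
      qed
      have "(\<lambda>n. of_nat (Suc n) * (c (Suc n + p) / fact (Suc n))) = (\<lambda>n. c (n + Suc p) / fact n)"
        by (rule ext) (simp only: fs add_Suc add_Suc_right)
      then have "(\<lambda>n. of_nat (Suc n) * (c (Suc n + p) / fact (Suc n))) sums A" using s2 by simp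
      from sums_Suc[OF this] show ?thesis by simp
    qed
    have "(\<lambda>n. (of_nat n * (c (n + p) / fact n) + of_nat (Suc p) * (c (n + p) / fact n)) / fact (Suc p))
            sums ((A + of_nat (Suc p) * B) / fact (Suc p))"
      by (intro sums_divide sums_add s2' sums_mult s1)
    moreover have "(\<lambda>n. (-1) ^ (n + (j - 1)) / fact (n + (j - 1))
                     * of_nat ((n + (j - 1) + 1) choose j) * gamma_tilde (n + (j - 1)) q)
          = (\<lambda>n. (of_nat n * (c (n + p) / fact n) + of_nat (Suc p) * (c (n + p) / fact n)) / fact (Suc p))"
      unfolding jp gt by (simp only: diff_Suc_1 binom_term)
    ultimately have sL: "(\<lambda>n. (-1) ^ (n + (j - 1)) / fact (n + (j - 1))
                     * of_nat ((n + (j - 1) + 1) choose j) * gamma_tilde (n + (j - 1)) q) sums L"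
      unfolding L_def jp by simp
    have "(-1) ^ j / fact j * D = - L"
      unfolding Dval L_def by (simp add: field_simps)
    with dD sL show "\<exists>D L. ((\<lambda>x. gamma_tilde j x) has_vector_derivative D) (at q) \<and>
              (\<lambda>n. (-1) ^ (n + (j - 1)) / fact (n + (j - 1))
                     * of_nat ((n + (j - 1) + 1) choose j) * gamma_tilde (n + (j - 1)) q) sums L \<and>
              (-1) ^ j / fact j * D = - L" by blast
  qed
  show "\<exists>D L. (psi_tilde has_vector_derivative D) (at q) \<and>
              (\<lambda>k. (-1) ^ k / fact k * gamma_tilde k q) sums L \<and>
              - D = - L"
  proof (intro exI conjI)
    have "((\<lambda>x. - gamma_tilde 0 x) has_vector_derivative - ((-1) ^ 0 * (deriv ^^ 0) (\<lambda>z. -z * ZE (z+1) q) 1)) (at q)"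
      by (intro has_vector_derivative_minus gt_vd assms)
    moreover have "psi_tilde = (\<lambda>x. - gamma_tilde 0 x)" by (auto simp: psi_tilde_def)
    moreover have "- ((-1) ^ 0 * (deriv ^^ 0) (\<lambda>z. -z * ZE (z+1) q) 1) = g 2"
      unfolding g_def by simp
    ultimately show "(psi_tilde has_vector_derivative g 2) (at q)" by simp
    have "(\<lambda>k. c (k + 0) / fact k) sums (deriv ^^ 0) g 2"
      unfolding c_def by (rule taylor2[OF hg])
    then show "(\<lambda>k. (-1) ^ k / fact k * gamma_tilde k q) sums g 2"
      unfolding gt by (simp add: mult.assoc[symmetric])
  qed simp
qed


end
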